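(* For a vertex-colored graph $(G,\sigma)$ whose coloring uses exactly two colors, the following are equivalent: (1) $(G,\sigma)$ is a $2$-RBMG; (2) $(G,\sigma)$ is a properly $2$-colored bicluster graph containing at least one edge; (3) $(G,\sigma)$ is a $2$-RBMG and an orthology graph; (4) $(G,\sigma)$ is a $2$-hc-cograph.
   Context: All graphs are finite, simple and undirected. A vertex coloring is a surjective map $\sigma:V\to S$; $(G,\sigma)$ is properly colored if adjacent vertices receive distinct colors. A phylogenetic tree $T$ on $L$ is a rooted tree with root $\rho_T$ and leaf set $L$ whose inner vertices other than the root have degree at least three; $u\preceq_T v$ means $v$ lies on the path from the root to $u$, and $\mathrm{lca}_T$ denotes last common ancestor. For a surjective leaf coloring $\sigma:L\to S$, a leaf $y$ is a best match of $x$ if $\sigma(x)\neq\sigma(y)$ and $\mathrm{lca}_T(x,y)\preceq_T\mathrm{lca}_T(x,y')$ for all $y'$ with $\sigma(y')=\sigma(y)$; reciprocal best matches are pairs each a best match of the other; $G(T,\sigma)$ is the graph on $L$ with edges the reciprocal best matches. A properly colored $(G,\sigma)$ is an RBMG if $G(T,\sigma)=(G,\sigma)$ for some leaf-colored tree $(T,\sigma)$; it is an $n$-RBMG if moreover $|\sigma(V)|=n$. A graph $G$ is an orthology graph if there is a phylogenetic tree $T$ on $V(G)$ with inner-vertex labeling $t:V^0(T)\to\{0,1\}$ such that $xy\in E(G)$ iff $t(\mathrm{lca}_T(x,y))=1$. For colored vertex-disjoint graphs, their join/disjoint union carry the combined coloring. A colored graph $(G,\sigma)$ is a hierarchically colored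 cograph (hc-cograph) if (K1) it is a single colored vertex, or (K2) $(G,\sigma)=(H,\sigma_H)\Join(H',\sigma_{H'})$ (join: disjoint union plus all edges between $V(H)$ and $V(H')$) with $\sigma(V(H))\cap\sigma(V(H'))=\emptyset$, or (K3) $(G,\sigma)=(H,\sigma_H)\,\dot\cup\,(H',\sigma_{H'})$ with $\sigma(V(H))\cap\sigma(V(H'))\in\{\sigma(V(H)),\sigma(V(H'))\}$, where in (K2),(K3) both $(H,\sigma_H),(H',\sigma_{H'})$ are hc-cographs; an $n$-hc-cograph is one using exactly $n$ colors. A biclique is either $K_1$ or a complete bipartite graph; a bicluster graph is a graph whose connected components are bicliques. *)

theory Defs
  imports Main
begin

definition simple_graph :: "'a set \<Rightarrow> 'a set set \<Rightarrow> bool" where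
  "simple_graph V E \<equiv> finite V \<and> (\<forall>e\<in>E. \<exists>x y. e = {x, y} \<and> x \<noteq> y \<and> x \<in> V \<and> y \<in> V)"

definition properly_colored :: "'a set set \<Rightarrow> ('a \<Rightarrow> 'c) \<Rightarrow> bool" where
  "properly_colored E \<sigma> \<equiv> (\<forall>x y. {x, y} \<in> E \<longrightarrow> \<sigma> x \<noteq> \<sigma> y)"

text \<open>A rooted tree is given by its finite vertex set VT, its root r and the ancestor order
  le (le u v  means  u \<preceq>_T v, i.e. v lies on the path from the root to u).
  It is a partial order with greatest element r in which the ancestors of every vertex form
  a chain (the Hasse diagram of such an order is exactly a rooted tree).\<close>

definition rooted_tree :: "'v set \<Rightarrow> ('v \<Rightarrow> 'v \<Rightarrow> bool) \<Rightarrow> 'v \<Rightarrow> bool" where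
  "rooted_tree VT le r \<equiv>
     finite VT \<and> r \<in> VT \<and>
     (\<forall>v\<in>VT. le v v) \<and>
     (\<forall>u\<in>VT. \<forall>v\<in>VT. le u v \<and> le v u \<longrightarrow> u = v) \<and>
     (\<forall>u\<in>VT. \<forall>v\<in>VT. \<forall>w\<in>VT. le u v \<and> le v w \<longrightarrow> le u w) \<and>
     (\<forall>v\<in>VT. le v r) \<and>
     (\<forall>v\<in>VT. \<forall>a\<in>VT. \<forall>b\<in>VT. le v a \<and> le v b \<longrightarrow> le a b \<or> le b a)"

definition tree_leaves :: "'v set \<Rightarrow> ('v \<Rightarrow> 'v \<Rightarrow> bool) \<Rightarrow> 'v set" where
  "tree_leaves VT le = {v \<in> VT. \<forall>u\<in>VT. le u v \<longrightarrow> u = v}"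

definition tree_children :: "'v set \<Rightarrow> ('v \<Rightarrow> 'v \<Rightarrow> bool) \<Rightarrow> 'v \<Rightarrow> 'v set" where
  "tree_children VT le v =
     {u \<in> VT. le u v \<and> u \<noteq> v \<and> (\<forall>w\<in>VT. le u w \<and> le w v \<longrightarrow> w = u \<or> w = v)}"

text \<open>Phylogenetic tree on L: leaf set L, and every inner vertex other than the root has
  degree at least three, i.e. (one parent plus) at least two children.\<close>

definition phylo_tree :: "'v set \<Rightarrow> ('v \<Rightarrow> 'v \<Rightarrow> bool) \<Rightarrow> 'v \<Rightarrow> 'v set \<Rightarrow> bool" where
  "phylo_tree VT le r L \<equiv>
     rooted_tree VT le r \<and> tree_leaves VT le = L \<and>
     (\<forall>v \<in> VT - L - {r}. card (tree_children VT le v) \<ge> 2)"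

definition lca :: "'v set \<Rightarrow> ('v \<Rightarrow> 'v \<Rightarrow> bool) \<Rightarrow> 'v \<Rightarrow> 'v \<Rightarrow> 'v" where
  "lca VT le x y =
     (THE z. z \<in> VT \<and> le x z \<and> le y z \<and> (\<forall>w\<in>VT. le x w \<and> le y w \<longrightarrow> le z w))"

text \<open>Trees on a leaf set V :: 'a set are represented with vertex type 'a + nat, the leaf
  x \<in> V being the tree vertex Inl x (every finite tree on V is isomorphic to such a tree).\<close>

definition best_match ::
  "('a + nat) set \<Rightarrow> (('a + nat) \<Rightarrow> ('a + nat) \<Rightarrow> bool) \<Rightarrow> ('a \<Rightarrow> 'c) \<Rightarrow> 'a set \<Rightarrow> 'a \<Rightarrow> 'a \<Rightarrow> bool" where
  "best_match VT le \<sigma> V x y \<equiv>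
     x \<in> V \<and> y \<in> V \<and> \<sigma> x \<noteq> \<sigma> y \<and>
     (\<forall>y'\<in>V. \<sigma> y' = \<sigma> y \<longrightarrow> le (lca VT le (Inl x) (Inl y)) (lca VT le (Inl x) (Inl y')))"

definition rbm_edges ::
  "('a + nat) set \<Rightarrow> (('a + nat) \<Rightarrow> ('a + nat) \<Rightarrow> bool) \<Rightarrow> ('a \<Rightarrow> 'c) \<Rightarrow> 'a set \<Rightarrow> 'a set set" where
  "rbm_edges VT le \<sigma> V =
     {{x, y} | x y. best_match VT le \<sigma> V x y \<and> best_match VT le \<sigma> V y x}"

definition is_RBMG :: "'a set \<Rightarrow> 'a set set \<Rightarrow> ('a \<Rightarrow> 'c) \<Rightarrow> bool" where
  "is_RBMG V E \<sigma> \<equiv> properly_colored E \<sigma> \<and>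
     (\<exists>VT le r. phylo_tree VT le r (Inl ` V) \<and> rbm_edges VT le \<sigma> V = E)"

definition is_n_RBMG :: "nat \<Rightarrow> 'a set \<Rightarrow> 'a set set \<Rightarrow> ('a \<Rightarrow> 'c) \<Rightarrow> bool" where
  "is_n_RBMG n V E \<sigma> \<equiv> is_RBMG V E \<sigma> \<and> card (\<sigma> ` V) = n"

definition orthology_graph :: "'a set \<Rightarrow> 'a set set \<Rightarrow> bool" where
  "orthology_graph V E \<equiv>
     (\<exists>VT le r (t :: 'a + nat \<Rightarrow> bool). phylo_tree VT le r (Inl ` V) \<and>
        (\<forall>x\<in>V. \<forall>y\<in>V. x \<noteq> y \<longrightarrow> ({x, y} \<in> E \<longleftrightarrow> t (lca VT le (Inl x) (Inl y)))))"

text \<open>The labeling t : V0(T) -> {0,1} is encoded as a boolean function (True = 1); only its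
  values on inner vertices matter, since the lca of two distinct leaves is inner.\<close>

inductive hc_cograph :: "('a \<Rightarrow> 'c) \<Rightarrow> 'a set \<Rightarrow> 'a set set \<Rightarrow> bool" for \<sigma> where
  K1: "hc_cograph \<sigma> {x} {}"
| K2: "\<lbrakk> hc_cograph \<sigma> V1 E1; hc_cograph \<sigma> V2 E2; V1 \<inter> V2 = {};
         \<sigma> ` V1 \<inter> \<sigma> ` V2 = {} \<rbrakk>
       \<Longrightarrow> hc_cograph \<sigma> (V1 \<union> V2) (E1 \<union> E2 \<union> {{a, b} | a b. a \<in> V1 \<and> b \<in> V2})"
| K3: "\<lbrakk> hc_cograph \<sigma> V1 E1; hc_cograph \<sigma> V2 E2; V1 \<inter> V2 = {};
         \<sigma> ` V1 \<inter> \<sigma> ` V2 \<in> {\<sigma> ` V1, \<sigma> ` V2} \<rbrakk>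
       \<Longrightarrow> hc_cograph \<sigma> (V1 \<union> V2) (E1 \<union> E2)"

definition is_n_hc_cograph :: "nat \<Rightarrow> 'a set \<Rightarrow> 'a set set \<Rightarrow> ('a \<Rightarrow> 'c) \<Rightarrow> bool" where
  "is_n_hc_cograph n V E \<sigma> \<equiv> hc_cograph \<sigma> V E \<and> card (\<sigma> ` V) = n"

definition connected_component :: "'a set \<Rightarrow> 'a set set \<Rightarrow> 'a \<Rightarrow> 'a set" where
  "connected_component V E x = {y \<in> V. (\<lambda>u v. {u, v} \<in> E)\<^sup>*\<^sup>* x y}"

definition biclique :: "'a set \<Rightarrow> 'a set set \<Rightarrow> bool" where
  "biclique C F \<equiv>
     (card C = 1 \<and> F = {}) \<or>
     (\<exists>A B. A \<noteq> {} \<and> B \<noteq> {} \<and> A \<inter> B = {} \<and> A \<union> B = C \<and>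
            F = {{a, b} | a b. a \<in> A \<and> b \<in> B})"

definition bicluster_graph :: "'a set \<Rightarrow> 'a set set \<Rightarrow> bool" where
  "bicluster_graph V E \<equiv>
     (\<forall>x\<in>V. biclique (connected_component V E x)
                      {e \<in> E. e \<subseteq> connected_component V E x})"

end

theory Submission
  imports Defs
begin


context
  fixes VT le r
  assumes rt: "rooted_tree VT le r"
begin
lemma rt_fin: "finite VT" using rt unfolding rooted_tree_def by blast
lemma rt_r: "r \<in> VT" using rt unfolding rooted_tree_def by blast
lemma rt_refl: "v \<in> VT \<Longrightarrow> le v v" using rt unfolding rooted_tree_def by blast
lemma rt_antisym: "u \<in> VT \<Longrightarrow> v \<in> VT \<Longrightarrow> le u v \<Longrightarrow> le v u \<Longrightarrow> u = v"
  using rt unfolding rooted_tree_def by blast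
lemma rt_trans: "u \<in> VT \<Longrightarrow> v \<in> VT \<Longrightarrow> w \<in> VT \<Longrightarrow> le u v \<Longrightarrow> le v w \<Longrightarrow> le u w"
proof -
  have "\<forall>u\<in>VT. \<forall>v\<in>VT. \<forall>w\<in>VT. le u v \<and> le v w \<longrightarrow> le u w" using rt unfolding rooted_tree_def by blast
  then show "u \<in> VT \<Longrightarrow> v \<in> VT \<Longrightarrow> w \<in> VT \<Longrightarrow> le u v \<Longrightarrow> le v w \<Longrightarrow> le u w" by blast
qed
lemma rt_root: "v \<in> VT \<Longrightarrow> le v r" using rt unfolding rooted_tree_def by blast
lemma rt_chain: "v \<in> VT \<Longrightarrow> a \<in> VT \<Longrightarrow> b \<in> VT \<Longrightarrow> le v a \<Longrightarrow> le v b \<Longrightarrow> le a b \<or> le b a"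
proof -
  have "\<forall>v\<in>VT. \<forall>a\<in>VT. \<forall>b\<in>VT. le v a \<and> le v b \<longrightarrow> le a b \<or> le b a" using rt unfolding rooted_tree_def by blast
  then show "v \<in> VT \<Longrightarrow> a \<in> VT \<Longrightarrow> b \<in> VT \<Longrightarrow> le v a \<Longrightarrow> le v b \<Longrightarrow> le a b \<or> le b a" by blast
qed
end

lemma rt_down_card:
  assumes rt: "rooted_tree VT le r" and "a \<in> VT" "b \<in> VT" "le a b" "a \<noteq> b"
  shows "card {w\<in>VT. le w a} < card {w\<in>VT. le w b}"
proof (rule psubset_card_mono)
  show "finite {w\<in>VT. le w b}" using rt_fin[OF rt] by auto
  have "{w\<in>VT. le w a} \<subseteq> {w\<in>VT. le w b}" using assms rt_trans[OF rt] by blast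
  moreover have "b \<notin> {w\<in>VT. le w a}" using assms rt_antisym[OF rt] by blast
  moreover have "b \<in> {w\<in>VT. le w b}" using assms rt_refl[OF rt] by blast
  ultimately show "{w\<in>VT. le w a} \<subset> {w\<in>VT. le w b}" by blast
qed

definition is_lca where
  "is_lca VT le p q z \<equiv> z \<in> VT \<and> le p z \<and> le q z \<and> (\<forall>w\<in>VT. le p w \<and> le q w \<longrightarrow> le z w)"

lemma lca_unique:
  assumes rt: "rooted_tree VT le r" and "is_lca VT le p q z"
  shows "lca VT le p q = z"
  unfolding lca_def
proof (rule the_equality)
  show "z \<in> VT \<and> le p z \<and> le q z \<and> (\<forall>w\<in>VT. le p w \<and> le q w \<longrightarrow> le z w)"
    using assms(2) unfolding is_lca_def by blast
  fix z' assume "z' \<in> VT \<and> le p z' \<and> le q z' \<and> (\<forall>w\<in>VT. le p w \<and> le q w \<longrightarrow> le z' w)"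
  then show "z' = z" using assms(2) rt_antisym[OF rt] unfolding is_lca_def by blast
qed

lemma lca_exists:
  assumes rt: "rooted_tree VT le r" and p: "p \<in> VT" and q: "q \<in> VT"
  shows "is_lca VT le p q (lca VT le p q)"
proof -
  define S where "S = {w\<in>VT. le p w \<and> le q w}"
  define f where "f w = card {u\<in>VT. le u w}" for w
  have "r \<in> S" using rt_r[OF rt] rt_root[OF rt] p q unfolding S_def by blast
  then have "\<exists>n. \<exists>w\<in>S. n = f w" by blast
  then obtain n where n: "\<exists>w\<in>S. n = f w" and nmin: "\<forall>m<n. \<not>(\<exists>w\<in>S. m = f w)"
    using exists_least_iff[of "\<lambda>n. \<exists>w\<in>S. n = f w"] by blast
  then obtain w where w: "w \<in> S" "n = f w" by blast
  have "\<forall>w'\<in>S. le w w'"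
  proof
    fix w' assume w': "w' \<in> S"
    have "le w w' \<or> le w' w" using rt_chain[OF rt, of p w w'] w w' p unfolding S_def by blast
    moreover
    { assume a: "le w' w" "\<not> le w w'"
      then have "w' \<noteq> w" using rt_refl[OF rt] w unfolding S_def by blast
      then have "f w' < f w" unfolding f_def using rt_down_card[OF rt] w w' a unfolding S_def by blast
      then have False using nmin w w' by blast }
    ultimately show "le w w'" by blast
  qed
  then have "is_lca VT le p q w" using w unfolding is_lca_def S_def by blast
  then show ?thesis using lca_unique[OF rt] by simp
qed

lemma lca_sym:
  assumes rt: "rooted_tree VT le r" and p: "p \<in> VT" and q: "q \<in> VT"
  shows "lca VT le p q = lca VT le q p"
proof -
  have "is_lca VT le q p (lca VT le p q)" using lca_exists[OF rt p q] unfolding is_lca_def by blast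
  then show ?thesis using lca_unique[OF rt] by simp
qed



definition hier :: "'a set \<Rightarrow> 'a set set \<Rightarrow> bool" where
  "hier V H \<equiv> finite V \<and> H \<subseteq> Pow V \<and> V \<in> H \<and> {} \<notin> H \<and> (\<forall>x\<in>V. {x} \<in> H) \<and>
     (\<forall>C\<in>H. \<forall>D\<in>H. C \<subseteq> D \<or> D \<subseteq> C \<or> C \<inter> D = {})"

definition lcl where
  "lcl H x y M \<equiv> M \<in> H \<and> x \<in> M \<and> y \<in> M \<and> (\<forall>C\<in>H. x \<in> C \<longrightarrow> y \<in> C \<longrightarrow> M \<subseteq> C)"

definition LC where "LC H x y = (SOME M. lcl H x y M)"

lemma hier_finH: "hier V H \<Longrightarrow> finite H"
  unfolding hier_def by (meson finite_Pow_iff finite_subset)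

lemma hier_lam: "hier V H \<Longrightarrow> C \<in> H \<Longrightarrow> D \<in> H \<Longrightarrow> C \<subseteq> D \<or> D \<subseteq> C \<or> C \<inter> D = {}"
  unfolding hier_def by blast

lemma lcl_ex:
  assumes h: "hier V H" and x: "x \<in> V" and y: "y \<in> V"
  shows "\<exists>M. lcl H x y M"
proof -
  let ?S = "{C\<in>H. x \<in> C \<and> y \<in> C}"
  have "finite ?S" using hier_finH[OF h] by simp
  moreover have "V \<in> ?S" using h x y unfolding hier_def by blast
  ultimately obtain M where M: "M \<in> ?S" "\<forall>C\<in>?S. C \<subseteq> M \<longrightarrow> M = C"
    using finite_has_minimal[of ?S] by blast
  have "\<forall>C\<in>H. x \<in> C \<longrightarrow> y \<in> C \<longrightarrow> M \<subseteq> C"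
  proof (intro ballI impI)
    fix C assume C: "C \<in> H" "x \<in> C" "y \<in> C"
    from hier_lam[OF h, of M C] M C show "M \<subseteq> C" by blast
  qed
  then show ?thesis using M unfolding lcl_def by blast
qed

lemma LC_lcl: "hier V H \<Longrightarrow> x \<in> V \<Longrightarrow> y \<in> V \<Longrightarrow> lcl H x y (LC H x y)"
  unfolding LC_def using lcl_ex someI_ex by metis

lemma LC_eq: assumes "hier V H" "x \<in> V" "y \<in> V" "lcl H x y M" shows "LC H x y = M"
  using LC_lcl[OF assms(1-3)] assms(4) unfolding lcl_def by blast

lemma LC_props:
  assumes "hier V H" "x \<in> V" "y \<in> V"
  shows "LC H x y \<in> H" "x \<in> LC H x y" "y \<in> LC H x y"
    "\<And>C. C \<in> H \<Longrightarrow> x \<in> C \<Longrightarrow> y \<in> C \<Longrightarrow> LC H x y \<subseteq> C"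
  using LC_lcl[OF assms] unfolding lcl_def by blast+

lemma LC_sym: assumes "hier V H" "x \<in> V" "y \<in> V" shows "LC H x y = LC H y x"
  using LC_eq[OF assms(1,3,2)] LC_lcl[OF assms] unfolding lcl_def by blast

lemma hier_tree:
  fixes V :: "'a set"
  assumes h: "hier V H"
  shows "\<exists>(VT :: ('a + nat) set) le r. phylo_tree VT le r (Inl ` V) \<and>
     (\<exists>node. inj_on node H \<and> VT = node ` H \<and> (\<forall>C\<in>H. \<forall>D\<in>H. le (node C) (node D) \<longleftrightarrow> C \<subseteq> D) \<and>
        (\<forall>x\<in>V. \<forall>y\<in>V. lca VT le (Inl x) (Inl y) = node (LC H x y)))"
proof -
  have finH: "finite H" by (rule hier_finH[OF h])
  obtain g :: "'a set \<Rightarrow> nat" where g: "inj_on g H" using finite_imp_inj_to_nat_seg[OF finH] by blast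
  define node :: "'a set \<Rightarrow> 'a + nat" where
    "node C = (if card C = 1 then Inl (the_elem C) else Inr (g C))" for C
  have nodex: "node {x} = Inl x" for x unfolding node_def by simp
  have HP: "C \<in> H \<Longrightarrow> C \<subseteq> V" for C using h unfolding hier_def by blast
  have HV: "V \<in> H" "{} \<notin> H" "\<And>x. x \<in> V \<Longrightarrow> {x} \<in> H" "finite V" using h unfolding hier_def by blast+
  have inj: "inj_on node H"
  proof (rule inj_onI)
    fix C D assume CD: "C \<in> H" "D \<in> H" "node C = node D"
    show "C = D"
    proof (cases "card C = 1")
      case True
      then obtain c where c: "C = {c}" using card_1_singletonE by blast
      show ?thesis
      proof (cases "card D = 1")
        case True
        then obtain d where "D = {d}" using card_1_singletonE by blast
        then show ?thesis using c CD(3) unfolding node_def by simp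
      next
        case False then show ?thesis using c CD(3) unfolding node_def by simp
      qed
    next
      case False
      then show ?thesis using CD g unfolding node_def by (auto split: if_splits dest: inj_onD)
    qed
  qed
  define VT where "VT = node ` H"
  define le where "le u v = (\<exists>C\<in>H. \<exists>D\<in>H. u = node C \<and> v = node D \<and> C \<subseteq> D)" for u v
  have leN: "C \<in> H \<Longrightarrow> D \<in> H \<Longrightarrow> le (node C) (node D) \<longleftrightarrow> C \<subseteq> D" for C D
    unfolding le_def using inj by (auto dest: inj_onD)
  define r where "r = node V"
  have rt: "rooted_tree VT le r"
    unfolding rooted_tree_def
  proof (intro conjI)
    show "finite VT" unfolding VT_def using finH by simp
    show "r \<in> VT" unfolding VT_def r_def using HV by simp
    show "\<forall>v\<in>VT. le v v" unfolding VT_def using leN by auto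
    show "\<forall>u\<in>VT. \<forall>v\<in>VT. le u v \<and> le v u \<longrightarrow> u = v" unfolding VT_def using leN by auto
    show "\<forall>u\<in>VT. \<forall>v\<in>VT. \<forall>w\<in>VT. le u v \<and> le v w \<longrightarrow> le u w" unfolding VT_def using leN by auto
    show "\<forall>v\<in>VT. le v r" unfolding VT_def r_def using leN HV HP by auto
    show "\<forall>v\<in>VT. \<forall>a\<in>VT. \<forall>b\<in>VT. le v a \<and> le v b \<longrightarrow> le a b \<or> le b a"
    proof (unfold VT_def, intro ballI impI)
      fix v a b assume "v \<in> node ` H" "a \<in> node ` H" "b \<in> node ` H" and lv: "le v a \<and> le v b"
      then obtain C A B where CAB: "C \<in> H" "A \<in> H" "B \<in> H" "v = node C" "a = node A" "b = node B" by blast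
      then have "C \<subseteq> A" "C \<subseteq> B" using lv leN by auto
      moreover have "C \<noteq> {}" using CAB HV by blast
      ultimately have "A \<inter> B \<noteq> {}" by blast
      then have "A \<subseteq> B \<or> B \<subseteq> A" using hier_lam[OF h CAB(2,3)] by blast
      then show "le a b \<or> le b a" using CAB leN by auto
    qed
  qed
  have leaves: "tree_leaves VT le = Inl ` V"
  proof
    show "tree_leaves VT le \<subseteq> Inl ` V"
    proof
      fix v assume "v \<in> tree_leaves VT le"
      then have v: "v \<in> VT" "\<forall>u\<in>VT. le u v \<longrightarrow> u = v" unfolding tree_leaves_def by auto
      then obtain C where C: "C \<in> H" "v = node C" unfolding VT_def by blast
      have "C \<noteq> {}" using C HV by auto
      then obtain x where x: "x \<in> C" by blast
      have xV: "x \<in> V" using HP C x by blast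
      have "le (node {x}) v" using leN C x HV(3)[OF xV] by auto
      then have "node {x} = v" using v HV(3)[OF xV] unfolding VT_def by blast
      then show "v \<in> Inl ` V" using nodex xV by auto
    qed
  next
    show "Inl ` V \<subseteq> tree_leaves VT le"
    proof
      fix v :: "'a + nat" assume "v \<in> Inl ` V"
      then obtain x where x: "x \<in> V" "v = Inl x" by blast
      then have v: "v = node {x}" "{x} \<in> H" using nodex HV by auto
      have "\<forall>u\<in>VT. le u v \<longrightarrow> u = v"
      proof (intro ballI impI)
        fix u assume "u \<in> VT" "le u v"
        then obtain D where "D \<in> H" "u = node D" "D \<subseteq> {x}" unfolding VT_def using v leN by auto
        then have "D = {x}" using HV by (metis subset_singletonD)
        then show "u = v" using v \<open>u = node D\<close> by simp
      qed
      then show "v \<in> tree_leaves VT le" unfolding tree_leaves_def VT_def using v by auto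
    qed
  qed
  have children: "\<forall>v \<in> VT - Inl ` V - {r}. card (tree_children VT le v) \<ge> 2"
  proof
    fix v assume v: "v \<in> VT - Inl ` V - {r}"
    then obtain C where C: "C \<in> H" "v = node C" unfolding VT_def by blast
    have notsing: "\<And>x. C \<noteq> {x}"
    proof
      fix x assume "C = {x}"
      then have "x \<in> V" "v = Inl x" using HP C nodex by auto
      then show False using v by blast
    qed
    have maxsub: "\<exists>M\<in>H. x \<in> M \<and> M \<subset> C \<and> (\<forall>W\<in>H. M \<subseteq> W \<longrightarrow> W \<subseteq> C \<longrightarrow> W = M \<or> W = C)"
      if x: "x \<in> C" for x
    proof -
      let ?S = "{D\<in>H. x \<in> D \<and> D \<subset> C}"
      have "finite ?S" using finH by simp
      moreover have "{x} \<in> ?S" using x notsing HV HP C by blast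
      ultimately obtain M where M: "M \<in> ?S" "\<forall>W\<in>?S. M \<subseteq> W \<longrightarrow> M = W"
        using finite_has_maximal[of ?S] by blast
      show ?thesis
        apply (rule bexI[of _ M])
        using M by blast+
    qed
    have ischild: "node M \<in> tree_children VT le v"
      if M: "M \<in> H" "M \<subset> C" "\<forall>W\<in>H. M \<subseteq> W \<longrightarrow> W \<subseteq> C \<longrightarrow> W = M \<or> W = C" for M
    proof -
      have "node M \<noteq> node C" using inj M C by (metis inj_onD psubset_eq)
      moreover have "\<forall>w\<in>VT. le (node M) w \<and> le w v \<longrightarrow> w = node M \<or> w = v"
        unfolding VT_def using M C leN by auto
      ultimately show ?thesis unfolding tree_children_def VT_def using M C leN by auto
    qed
    have "C \<noteq> {}" using C HV by auto
    then obtain x where x: "x \<in> C" by blast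
    obtain M1 where M1: "M1 \<in> H" "x \<in> M1" "M1 \<subset> C" "\<forall>W\<in>H. M1 \<subseteq> W \<longrightarrow> W \<subseteq> C \<longrightarrow> W = M1 \<or> W = C"
      using maxsub[OF x] by blast
    obtain y where y: "y \<in> C" "y \<notin> M1" using M1 by blast
    obtain M2 where M2: "M2 \<in> H" "y \<in> M2" "M2 \<subset> C" "\<forall>W\<in>H. M2 \<subseteq> W \<longrightarrow> W \<subseteq> C \<longrightarrow> W = M2 \<or> W = C"
      using maxsub[OF y(1)] by blast
    have ne: "node M1 \<noteq> node M2" using inj M1 M2 y by (metis inj_onD)
    have sub: "{node M1, node M2} \<subseteq> tree_children VT le v" using ischild M1 M2 by blast
    have fin: "finite (tree_children VT le v)" unfolding tree_children_def VT_def using finH by simp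
    have "card {node M1, node M2} = 2" using ne by simp
    then show "card (tree_children VT le v) \<ge> 2" using card_mono[OF fin sub] by simp
  qed
  have phylo: "phylo_tree VT le r (Inl ` V)"
    unfolding phylo_tree_def using rt leaves children by blast
  have lcaeq: "\<forall>x\<in>V. \<forall>y\<in>V. lca VT le (Inl x) (Inl y) = node (LC H x y)"
  proof (intro ballI)
    fix x y assume x: "x \<in> V" and y: "y \<in> V"
    note L = LC_props[OF h x y]
    have "is_lca VT le (Inl x) (Inl y) (node (LC H x y))"
      unfolding is_lca_def
    proof (intro conjI ballI impI)
      show "node (LC H x y) \<in> VT" unfolding VT_def using L by simp
      show "le (Inl x) (node (LC H x y))" using leN[of "{x}"] L HV x nodex by auto
      show "le (Inl y) (node (LC H x y))" using leN[of "{y}"] L HV y nodex by auto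
      fix w assume "w \<in> VT" "le (Inl x) w \<and> le (Inl y) w"
      then obtain W where W: "W \<in> H" "w = node W" "{x} \<subseteq> W" "{y} \<subseteq> W"
        unfolding VT_def using leN HV x y nodex by (metis imageE)
      then show "le (node (LC H x y)) w" using L leN by auto
    qed
    then show "lca VT le (Inl x) (Inl y) = node (LC H x y)" using lca_unique[OF rt] by blast
  qed
  show ?thesis using phylo inj lcaeq leN unfolding VT_def by blast
qed

lemma hier_tree_obt:
  fixes V :: "'a set"
  assumes "hier V H"
  obtains VT :: "('a + nat) set" and le r node where "phylo_tree VT le r (Inl ` V)" "inj_on node H" "VT = node ` H"
    "\<forall>C\<in>H. \<forall>D\<in>H. le (node C) (node D) \<longleftrightarrow> C \<subseteq> D"
    "\<forall>x\<in>V. \<forall>y\<in>V. lca VT le (Inl x) (Inl y) = node (LC H x y)"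
  using hier_tree[OF assms] by (elim exE conjE) (rule that, assumption+)



lemma edge_in: "simple_graph V E \<Longrightarrow> {x,y} \<in> E \<Longrightarrow> x \<in> V \<and> y \<in> V \<and> x \<noteq> y"
  unfolding simple_graph_def by (metis doubleton_eq_iff)

lemma edge_form: "simple_graph V E \<Longrightarrow> e \<in> E \<Longrightarrow> \<exists>x y. e = {x,y} \<and> x \<noteq> y \<and> x \<in> V \<and> y \<in> V"
  unfolding simple_graph_def by blast

lemma rtr_sym:
  assumes "(\<lambda>u v. {u, v} \<in> E)\<^sup>*\<^sup>* x y" shows "(\<lambda>u v. {u, v} \<in> E)\<^sup>*\<^sup>* y x"
  using assms
proof (induction rule: rtranclp_induct)
  case base then show ?case by simp
next
  case (step y z)
  then have "{z,y} \<in> E" by (simp add: insert_commute)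
  then show ?case using step by (meson converse_rtranclp_into_rtranclp)
qed

lemma cc_self: "x \<in> V \<Longrightarrow> x \<in> connected_component V E x"
  unfolding connected_component_def by simp

lemma cc_sub: "connected_component V E x \<subseteq> V"
  unfolding connected_component_def by auto

lemma cc_same:
  assumes "y \<in> connected_component V E x"
  shows "connected_component V E y = connected_component V E x"
proof -
  have xy: "(\<lambda>u v. {u, v} \<in> E)\<^sup>*\<^sup>* x y" using assms unfolding connected_component_def by simp
  then have yx: "(\<lambda>u v. {u, v} \<in> E)\<^sup>*\<^sup>* y x" by (rule rtr_sym)
  show ?thesis unfolding connected_component_def
    using xy yx by (meson rtranclp_trans)
qed

lemma cc_edge: "simple_graph V E \<Longrightarrow> {x,y} \<in> E \<Longrightarrow> y \<in> connected_component V E x"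
  unfolding connected_component_def using edge_in by fastforce

lemma cc_triv_iff:
  assumes "x \<in> V" "simple_graph V E"
  shows "connected_component V E x = {x} \<longleftrightarrow> (\<forall>z. {x,z} \<notin> E)"
proof
  assume a: "connected_component V E x = {x}"
  show "\<forall>z. {x,z} \<notin> E"
  proof (intro allI notI)
    fix z assume "{x,z} \<in> E"
    then have "z \<in> connected_component V E x" "z \<noteq> x" using cc_edge edge_in assms by fastforce+
    then show False using a by blast
  qed
next
  assume a: "\<forall>z. {x,z} \<notin> E"
  have "y = x" if "(\<lambda>u v. {u, v} \<in> E)\<^sup>*\<^sup>* x y" for y
    using that by (cases rule: converse_rtranclpE) (use a in auto)
  then show "connected_component V E x = {x}" unfolding connected_component_def using assms by auto
qed

lemma two_col:
  assumes "card (\<sigma> ` V) = 2" "x \<in> V" "y \<in> V" "z \<in> V" "\<sigma> x \<noteq> \<sigma> y" "\<sigma> y \<noteq> \<sigma> z"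
  shows "\<sigma> x = \<sigma> z"
proof -
  obtain a b where ab: "\<sigma> ` V = {a,b}" "a \<noteq> b" using assms(1) card_2_iff by metis
  then have "\<sigma> x \<in> {a,b}" "\<sigma> y \<in> {a,b}" "\<sigma> z \<in> {a,b}" using assms by blast+
  then show ?thesis using assms(5,6) by auto
qed

lemma p4_inv:
  assumes sg: "simple_graph V E" and c2: "card (\<sigma> ` V) = 2" and pc: "properly_colored E \<sigma>"
    and p4: "\<forall>x y x' y'. {x,y} \<in> E \<longrightarrow> {y,x'} \<in> E \<longrightarrow> {x',y'} \<in> E \<longrightarrow> {x,y'} \<in> E"
    and path: "(\<lambda>u v. {u, v} \<in> E)\<^sup>*\<^sup>* x z" and x: "x \<in> V"
  shows "z \<in> V \<and> (z = x \<or> {x,z} \<in> E \<or> (\<sigma> z = \<sigma> x \<and> (\<forall>w. {z,w} \<in> E \<longleftrightarrow> {x,w} \<in> E)))"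
  using path
proof (induction rule: rtranclp_induct)
  case base then show ?case using x by simp
next
  case (step z z')
  have zz': "z' \<in> V" "z \<in> V" using edge_in[OF sg step.hyps(2)] by blast+
  have cz: "\<sigma> z \<noteq> \<sigma> z'" using pc step.hyps(2) unfolding properly_colored_def by blast
  from step.IH consider "z = x" | "{x,z} \<in> E" | "\<sigma> z = \<sigma> x \<and> (\<forall>w. {z,w} \<in> E \<longleftrightarrow> {x,w} \<in> E)" by blast
  then show ?case
  proof cases
    case 1 then show ?thesis using step zz' by blast
  next
    case 2
    have cx: "\<sigma> x \<noteq> \<sigma> z" using pc 2 unfolding properly_colored_def by blast
    have "\<sigma> z' = \<sigma> x" using two_col[OF c2 zz'(1) zz'(2) x] cz cx by metis
    moreover have "\<forall>w. {z',w} \<in> E \<longleftrightarrow> {x,w} \<in> E"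
    proof (intro allI iffI)
      fix w assume "{z',w} \<in> E"
      then show "{x,w} \<in> E" using p4 2 step.hyps(2) by blast
    next
      fix w assume "{x,w} \<in> E"
      moreover have "{z',z} \<in> E" "{z,x} \<in> E" using 2 step.hyps(2) by (simp_all add: insert_commute)
      ultimately show "{z',w} \<in> E" using p4 by blast
    qed
    ultimately show ?thesis using zz' by blast
  next
    case 3 then show ?thesis using step zz' by blast
  qed
qed

lemma p4_bicluster:
  assumes sg: "simple_graph V E" and c2: "card (\<sigma> ` V) = 2" and pc: "properly_colored E \<sigma>"
    and p4: "\<forall>x y x' y'. {x,y} \<in> E \<longrightarrow> {y,x'} \<in> E \<longrightarrow> {x',y'} \<in> E \<longrightarrow> {x,y'} \<in> E"
  shows "bicluster_graph V E"
  unfolding bicluster_graph_def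
proof
  fix x assume x: "x \<in> V"
  define K where "K = connected_component V E x"
  have inv: "z \<in> K \<Longrightarrow> z \<in> V \<and> (z = x \<or> {x,z} \<in> E \<or> (\<sigma> z = \<sigma> x \<and> (\<forall>w. {z,w} \<in> E \<longleftrightarrow> {x,w} \<in> E)))" for z
    using p4_inv[OF sg c2 pc p4 _ x] unfolding K_def connected_component_def by blast
  show "biclique K {e \<in> E. e \<subseteq> K}"
  proof (cases "K = {x}")
    case True
    have "{e \<in> E. e \<subseteq> K} = {}" using True edge_form[OF sg] by fastforce
    then show ?thesis using True unfolding biclique_def by simp
  next
    case False
    then obtain z where z: "{x,z} \<in> E" using cc_triv_iff[OF x sg] unfolding K_def by blast
    define A where "A = {w \<in> K. \<sigma> w = \<sigma> x}"
    define B where "B = {w \<in> K. \<sigma> w \<noteq> \<sigma> x}"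
    have xK: "x \<in> K" unfolding K_def using cc_self[OF x] .
    have zK: "z \<in> K" unfolding K_def using cc_edge[OF sg z] .
    have zc: "\<sigma> z \<noteq> \<sigma> x" using pc z unfolding properly_colored_def by metis
    have "{e \<in> E. e \<subseteq> K} = {{a, b} | a b. a \<in> A \<and> b \<in> B}"
    proof
      show "{e \<in> E. e \<subseteq> K} \<subseteq> {{a, b} | a b. a \<in> A \<and> b \<in> B}"
      proof
        fix e assume e: "e \<in> {e \<in> E. e \<subseteq> K}"
        then obtain u v where uv: "e = {u,v}" "u \<in> V" "v \<in> V" using edge_form[OF sg] by blast
        have "\<sigma> u \<noteq> \<sigma> v" using pc e uv unfolding properly_colored_def by blast
        then have "(\<sigma> u = \<sigma> x \<and> \<sigma> v \<noteq> \<sigma> x) \<or> (\<sigma> v = \<sigma> x \<and> \<sigma> u \<noteq> \<sigma> x)"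
          using two_col[OF c2 uv(2) x uv(3)] by metis
        then show "e \<in> {{a, b} | a b. a \<in> A \<and> b \<in> B}" using e uv unfolding A_def B_def
          by (auto simp: insert_commute)
      qed
    next
      show "{{a, b} | a b. a \<in> A \<and> b \<in> B} \<subseteq> {e \<in> E. e \<subseteq> K}"
      proof
        fix e assume "e \<in> {{a, b} | a b. a \<in> A \<and> b \<in> B}"
        then obtain a b where ab: "e = {a,b}" "a \<in> A" "b \<in> B" by blast
        have xb: "{x,b} \<in> E" using inv[of b] ab unfolding B_def by auto
        have "{a,b} \<in> E"
        proof -
          from inv[of a] ab(2) consider "a = x" | "{x,a} \<in> E" | "\<sigma> a = \<sigma> x \<and> (\<forall>w. {a,w} \<in> E \<longleftrightarrow> {x,w} \<in> E)"
            unfolding A_def by blast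
          then show ?thesis
          proof cases
            case 1 then show ?thesis using xb by simp
          next
            case 2 then have "\<sigma> x \<noteq> \<sigma> a" using pc unfolding properly_colored_def by blast
            then have False using ab(2) unfolding A_def by auto
            then show ?thesis ..
          next
            case 3 then show ?thesis using xb by blast
          qed
        qed
        then show "e \<in> {e \<in> E. e \<subseteq> K}" using ab unfolding A_def B_def by auto
      qed
    qed
    moreover have "A \<noteq> {}" "B \<noteq> {}" "A \<inter> B = {}" "A \<union> B = K"
      using xK zK zc unfolding A_def B_def by auto
    ultimately show ?thesis unfolding biclique_def by blast
  qed
qed

lemma bicluster_char:
  assumes sg: "simple_graph V E" and c2: "card (\<sigma> ` V) = 2" and pc: "properly_colored E \<sigma>"
    and bc: "bicluster_graph V E" and x: "x \<in> V" and y: "y \<in> V"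
  shows "{x,y} \<in> E \<longleftrightarrow> y \<in> connected_component V E x \<and> \<sigma> x \<noteq> \<sigma> y"
proof
  assume e: "{x,y} \<in> E"
  have "\<sigma> x \<noteq> \<sigma> y" using pc e unfolding properly_colored_def by blast
  then show "y \<in> connected_component V E x \<and> \<sigma> x \<noteq> \<sigma> y"
    using cc_edge[OF sg e] by blast
next
  assume a: "y \<in> connected_component V E x \<and> \<sigma> x \<noteq> \<sigma> y"
  define K where "K = connected_component V E x"
  have xK: "x \<in> K" unfolding K_def using cc_self[OF x] .
  have yK: "y \<in> K" "x \<noteq> y" using a unfolding K_def by auto
  have "biclique K {e \<in> E. e \<subseteq> K}" using bc x unfolding bicluster_graph_def K_def by blast
  then show "{x,y} \<in> E"
    unfolding biclique_def
  proof (elim disjE exE conjE)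
    assume 1: "card K = 1"
    then obtain c where "K = {c}" using card_1_singletonE by blast
    then show ?thesis using xK yK by blast
  next
    fix A B assume 2: "A \<noteq> {}" "B \<noteq> {}" "A \<inter> B = {}" "A \<union> B = K"
      "{e \<in> E. e \<subseteq> K} = {{a, b} | a b. a \<in> A \<and> b \<in> B}"
    have KV: "K \<subseteq> V" unfolding K_def by (rule cc_sub)
    note AB = 2(1-4)
    have inE: "{a,b} \<in> E" if "a \<in> A" "b \<in> B" for a b
    proof -
      have "{a,b} \<in> {{a, b} | a b. a \<in> A \<and> b \<in> B}" using that by blast
      then show ?thesis using 2(5) by blast
    qed
    have col: "\<sigma> a \<noteq> \<sigma> b" if "a \<in> A" "b \<in> B" for a b
      using inE[OF that] pc unfolding properly_colored_def by blast
    obtain a0 where a0: "a0 \<in> A" using AB by blast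
    obtain b0 where b0: "b0 \<in> B" using AB by blast
    have AV: "A \<subseteq> V" "B \<subseteq> V" using KV AB by auto
    have sameA: "\<sigma> a = \<sigma> a'" if "a \<in> A" "a' \<in> A" for a a'
    proof (rule two_col[OF c2, of a b0 a'])
      show "a \<in> V" "b0 \<in> V" "a' \<in> V" using that b0 AV by auto
      show "\<sigma> a \<noteq> \<sigma> b0" using col that b0 by blast
      show "\<sigma> b0 \<noteq> \<sigma> a'" using col that b0 by metis
    qed
    have sameB: "\<sigma> b = \<sigma> b'" if "b \<in> B" "b' \<in> B" for b b'
    proof (rule two_col[OF c2, of b a0 b'])
      show "b \<in> V" "a0 \<in> V" "b' \<in> V" using that a0 AV by auto
      show "\<sigma> b \<noteq> \<sigma> a0" using col that a0 by metis
      show "\<sigma> a0 \<noteq> \<sigma> b'" using col that a0 by blast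
    qed
    have xAB: "x \<in> A \<or> x \<in> B" "y \<in> A \<or> y \<in> B" using xK yK AB by auto
    have "\<not> (x \<in> A \<and> y \<in> A)" using sameA a by blast
    moreover have "\<not> (x \<in> B \<and> y \<in> B)" using sameB a by blast
    ultimately have "(x \<in> A \<and> y \<in> B) \<or> (x \<in> B \<and> y \<in> A)" using xAB by blast
    then show ?thesis using inE[of x y] inE[of y x] by (auto simp: insert_commute)
  qed
qed



lemma rbmg_props:
  assumes sg: "simple_graph V E" and c2: "card (\<sigma> ` V) = 2" and rb: "is_RBMG V E \<sigma>"
  shows "properly_colored E \<sigma> \<and> bicluster_graph V E \<and> E \<noteq> {}"
proof -
  have pc: "properly_colored E \<sigma>" using rb unfolding is_RBMG_def by blast
  obtain VT le r where ph: "phylo_tree VT le r (Inl ` V)" and eq: "rbm_edges VT le \<sigma> V = E"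
    using rb unfolding is_RBMG_def by blast
  have rt: "rooted_tree VT le r" using ph unfolding phylo_tree_def by blast
  have inVT: "x \<in> V \<Longrightarrow> Inl x \<in> VT" for x
    using ph unfolding phylo_tree_def tree_leaves_def by blast
  define l where "l x y = lca VT le (Inl x) (Inl y)" for x y
  have lP: "l x y \<in> VT" "le (Inl x) (l x y)" "le (Inl y) (l x y)"
    "\<And>w. w \<in> VT \<Longrightarrow> le (Inl x) w \<Longrightarrow> le (Inl y) w \<Longrightarrow> le (l x y) w"
    if "x \<in> V" "y \<in> V" for x y
    using lca_exists[OF rt inVT[OF that(1)] inVT[OF that(2)]] unfolding is_lca_def l_def by blast+
  have lsym: "l x y = l y x" if "x \<in> V" "y \<in> V" for x y
    unfolding l_def using lca_sym[OF rt inVT[OF that(1)] inVT[OF that(2)]] .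
  have bm: "best_match VT le \<sigma> V x y \<longleftrightarrow> x \<in> V \<and> y \<in> V \<and> \<sigma> x \<noteq> \<sigma> y \<and>
      (\<forall>y'\<in>V. \<sigma> y' = \<sigma> y \<longrightarrow> le (l x y) (l x y'))" for x y
    unfolding best_match_def l_def by blast
  have edge_bm: "best_match VT le \<sigma> V u v \<and> best_match VT le \<sigma> V v u" if "{u,v} \<in> E" for u v
  proof -
    from that obtain x y where "{u,v} = {x,y}" "best_match VT le \<sigma> V x y" "best_match VT le \<sigma> V y x"
      unfolding eq[symmetric] rbm_edges_def by blast
    then show ?thesis by (metis doubleton_eq_iff)
  qed
  have bm_E: "{u,v} \<in> E" if "best_match VT le \<sigma> V u v" "best_match VT le \<sigma> V v u" for u v
    unfolding eq[symmetric] rbm_edges_def using that by blast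
  note antis = rt_antisym[OF rt] and trans = rt_trans[OF rt]
  have p4: "\<forall>x y x' y'. {x,y} \<in> E \<longrightarrow> {y,x'} \<in> E \<longrightarrow> {x',y'} \<in> E \<longrightarrow> {x,y'} \<in> E"
  proof (intro allI impI)
    fix x y x' y' assume e1: "{x,y} \<in> E" and e2: "{y,x'} \<in> E" and e3: "{x',y'} \<in> E"
    have V: "x \<in> V" "y \<in> V" "x' \<in> V" "y' \<in> V" using edge_in[OF sg] e1 e2 e3 by blast+
    have c1: "\<sigma> x \<noteq> \<sigma> y" "\<sigma> y \<noteq> \<sigma> x'" "\<sigma> x' \<noteq> \<sigma> y'"
      using pc e1 e2 e3 unfolding properly_colored_def by blast+
    have cxx: "\<sigma> x' = \<sigma> x" using two_col[OF c2 V(1) V(2) V(3)] c1 by simp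
    have cyy: "\<sigma> y' = \<sigma> y" using two_col[OF c2 V(2) V(3) V(4)] c1 by simp
    have b1: "best_match VT le \<sigma> V x y" "best_match VT le \<sigma> V y x" using edge_bm[OF e1] by blast+
    have b2: "best_match VT le \<sigma> V y x'" "best_match VT le \<sigma> V x' y" using edge_bm[OF e2] by blast+
    have b3: "best_match VT le \<sigma> V x' y'" "best_match VT le \<sigma> V y' x'" using edge_bm[OF e3] by blast+
    have "le (l y x) (l y x')" using b1(2) V cxx unfolding bm by auto
    moreover have "le (l y x') (l y x)" using b2(1) V cxx unfolding bm by auto
    ultimately have u1: "l y x = l y x'" using antis lP V by blast
    have "le (l x' y) (l x' y')" using b2(2) V cyy unfolding bm by auto
    moreover have "le (l x' y') (l x' y)" using b3(1) V cyy unfolding bm by auto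
    ultimately have u2: "l x' y = l x' y'" using antis lP V by blast
    define u where "u = l y x"
    have uu: "l x' y' = u" "l x y = u" unfolding u_def using u1 u2 lsym V by simp_all
    have uVT: "u \<in> VT" unfolding u_def using lP V by blast
    have "le (Inl y') u" using lP(3)[OF V(3) V(4)] uu by simp
    moreover have "le (Inl x) u" unfolding u_def using lP(3)[OF V(2) V(1)] .
    ultimately have xy'u: "le (l x y') u" using lP(4)[OF V(1) V(4) uVT] by blast
    have "best_match VT le \<sigma> V x y'"
      unfolding bm
    proof (intro conjI ballI impI)
      show "x \<in> V" "y' \<in> V" using V by simp_all
      show "\<sigma> x \<noteq> \<sigma> y'" using cyy c1 by simp
      fix y'' assume y'': "y'' \<in> V" "\<sigma> y'' = \<sigma> y'"
      have "le (l x y) (l x y'')" using b1(1) y'' cyy unfolding bm by auto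
      then show "le (l x y') (l x y'')" using trans[OF lP(1)[OF V(1) V(4)] uVT lP(1)[OF V(1) y''(1)]] xy'u uu
        by simp
    qed
    moreover have "best_match VT le \<sigma> V y' x"
      unfolding bm
    proof (intro conjI ballI impI)
      show "x \<in> V" "y' \<in> V" using V by simp_all
      show "\<sigma> y' \<noteq> \<sigma> x" using cyy c1 by simp
      fix x'' assume x'': "x'' \<in> V" "\<sigma> x'' = \<sigma> x"
      have "le (l y' x') (l y' x'')" using b3(2) x'' cxx unfolding bm by auto
      moreover have "l y' x' = u" using uu lsym V by metis
      moreover have "l y' x = l x y'" using lsym V by metis
      ultimately show "le (l y' x) (l y' x'')" using trans[OF lP(1)[OF V(1) V(4)] uVT lP(1)[OF V(4) x''(1)]] xy'u
        by simp
    qed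
    ultimately show "{x,y'} \<in> E" using bm_E by blast
  qed
  have ne: "E \<noteq> {}"
  proof -
    define f where "f x y = card {w\<in>VT. le w (l x y)}" for x y
    define P where "P n = (\<exists>x\<in>V. \<exists>y\<in>V. \<sigma> x \<noteq> \<sigma> y \<and> n = f x y)" for n
    obtain a b where ab: "\<sigma> ` V = {a,b}" "a \<noteq> b" using c2 card_2_iff by metis
    then obtain x0 y0 where "x0 \<in> V" "y0 \<in> V" "\<sigma> x0 = a" "\<sigma> y0 = b"
      by (metis imageE insertCI)
    then have "P (f x0 y0)" unfolding P_def using ab by blast
    then obtain n where n: "P n" "\<forall>m<n. \<not> P m" using exists_least_iff[of P] by blast
    then obtain x y where xy: "x \<in> V" "y \<in> V" "\<sigma> x \<noteq> \<sigma> y" "n = f x y" unfolding P_def by blast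
    have key: "le (l p q) (l p q')" if pq: "p \<in> V" "q \<in> V" "q' \<in> V" "\<sigma> p \<noteq> \<sigma> q'" "f p q = n" for p q q'
    proof (rule ccontr)
      assume nle: "\<not> le (l p q) (l p q')"
      have "le (l p q) (l p q') \<or> le (l p q') (l p q)"
        using rt_chain[OF rt inVT[OF pq(1)] lP(1)[OF pq(1,2)] lP(1)[OF pq(1,3)] lP(2)[OF pq(1,2)] lP(2)[OF pq(1,3)]] .
      then have "le (l p q') (l p q)" using nle by blast
      moreover have "l p q' \<noteq> l p q" using nle rt_refl[OF rt] lP(1)[OF pq(1,2)] by metis
      ultimately have "f p q' < f p q" unfolding f_def using rt_down_card[OF rt lP(1)[OF pq(1,3)] lP(1)[OF pq(1,2)]] by blast
      moreover have "P (f p q')" unfolding P_def using pq by blast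
      ultimately show False using n(2) pq by simp
    qed
    have "best_match VT le \<sigma> V x y" unfolding bm using xy key by metis
    moreover have "best_match VT le \<sigma> V y x"
    proof -
      have "f y x = n" unfolding f_def xy(4) using lsym xy by simp
      then show ?thesis unfolding bm using xy key by metis
    qed
    ultimately show ?thesis using bm_E by blast
  qed
  show ?thesis using pc p4_bicluster[OF sg c2 pc p4] ne by blast
qed



lemma bic_construct:
  assumes sg: "simple_graph V E" and c2: "card (\<sigma> ` V) = 2" and pc: "properly_colored E \<sigma>"
    and bc: "bicluster_graph V E" and ne: "E \<noteq> {}"
  shows "is_RBMG V E \<sigma> \<and> orthology_graph V E"
proof -
  define K where "K = connected_component V E"
  have char: "{x,y} \<in> E \<longleftrightarrow> y \<in> K x \<and> \<sigma> x \<noteq> \<sigma> y" if "x \<in> V" "y \<in> V" for x y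
    unfolding K_def using bicluster_char[OF sg c2 pc bc that] .
  have Kself: "x \<in> V \<Longrightarrow> x \<in> K x" for x unfolding K_def by (rule cc_self)
  have Ksub: "K x \<subseteq> V" for x unfolding K_def by (rule cc_sub)
  have Ksame: "y \<in> K x \<Longrightarrow> K y = K x" for x y unfolding K_def by (rule cc_same)
  have Ktriv: "x \<in> V \<Longrightarrow> K x = {x} \<longleftrightarrow> (\<forall>z. {x,z} \<notin> E)" for x unfolding K_def using cc_triv_iff[OF _ sg] by blast
  have finV: "finite V" using sg unfolding simple_graph_def by blast
  obtain e0 where e0: "e0 \<in> E" using ne by blast
  then obtain x0 y0 where xy0: "e0 = {x0,y0}" "x0 \<noteq> y0" "x0 \<in> V" "y0 \<in> V" using edge_form[OF sg] by blast
  have E0: "{x0,y0} \<in> E" using e0 xy0 by simp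
  define a where "a = \<sigma> x0"
  have y0K: "y0 \<in> K x0" and ab': "\<sigma> x0 \<noteq> \<sigma> y0" using char[OF xy0(3,4)] E0 by blast+
  have ab: "\<sigma> y0 \<noteq> a" using ab' unfolding a_def by metis
  have nontriv: "\<exists>w \<in> K x. \<sigma> w \<noteq> \<sigma> x" if xv: "x \<in> V" and nt: "K x \<noteq> {x}" for x
  proof -
    obtain w where w: "{x,w} \<in> E" using Ktriv[OF xv] nt by blast
    then have "w \<in> V" using edge_in[OF sg] by blast
    then have "w \<in> K x \<and> \<sigma> x \<noteq> \<sigma> w" using char[OF xv] w by blast
    then show ?thesis by metis
  qed
  define Ia where "Ia = {x\<in>V. K x = {x} \<and> \<sigma> x = a}"
  define Wa where "Wa = K x0 \<union> Ia"
  define Pc where "Pc x = {z \<in> K x. \<sigma> z = \<sigma> x}" for x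
  define H where "H = {V, Wa} \<union> (\<lambda>x. {x}) ` V \<union> K ` V \<union> Pc ` V"
  have WaV: "Wa \<subseteq> V" unfolding Wa_def Ia_def using Ksub by blast
  have Waclosed: "z \<in> Wa \<Longrightarrow> K z \<subseteq> Wa" for z
    unfolding Wa_def Ia_def using Ksame by auto
  have x0Wa: "x0 \<in> Wa" "y0 \<in> Wa" unfolding Wa_def using Kself xy0 y0K by auto
  have Pcsub: "Pc x \<subseteq> K x" for x unfolding Pc_def by blast
  have Pcself: "x \<in> V \<Longrightarrow> x \<in> Pc x" for x unfolding Pc_def using Kself by blast
  define Loc where "Loc = (\<lambda>x. {x}) ` V \<union> K ` V \<union> Pc ` V"
  have Loc_sub: "D \<in> Loc \<Longrightarrow> \<exists>x\<in>V. D \<subseteq> K x" for D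
    unfolding Loc_def using Kself Pcsub by blast
  have lam_closed: "C \<subseteq> D \<or> D \<subseteq> C \<or> C \<inter> D = {}"
    if cl: "\<forall>z\<in>C. K z \<subseteq> C" and DL: "D \<in> Loc" for C D
  proof -
    obtain x where x: "x \<in> V" "D \<subseteq> K x" using Loc_sub[OF DL] by blast
    show ?thesis
    proof (cases "C \<inter> D = {}")
      case False
      then obtain z where "z \<in> C" "z \<in> D" by blast
      then have "K z \<subseteq> C" "K z = K x" using cl x Ksame by blast+
      then show ?thesis using x by blast
    qed simp
  qed
  have lam_loc: "C \<subseteq> D \<or> D \<subseteq> C \<or> C \<inter> D = {}" if CL: "C \<in> Loc" and DL: "D \<in> Loc" for C D
  proof (cases "C \<inter> D = {}")
    case False
    then obtain z where z: "z \<in> C" "z \<in> D" by blast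
    have sing: "\<And>x. C = {x} \<or> D = {x} \<Longrightarrow> ?thesis" using z by blast
    from CL obtain x where x: "x \<in> V" "C = {x} \<or> C = K x \<or> C = Pc x" unfolding Loc_def by blast
    from DL obtain y where y: "y \<in> V" "D = {y} \<or> D = K y \<or> D = Pc y" unfolding Loc_def by blast
    have zx: "K z = K x" "K z = K y" using z x y Ksame Pcsub by blast+
    show ?thesis
    proof (cases "C = {x} \<or> D = {y}")
      case True then show ?thesis using sing by blast
    next
      case False
      then have C: "C = K x \<or> C = Pc x" and D: "D = K y \<or> D = Pc y" using x y by blast+
      have Kxy: "K x = K y" using zx by simp
      have "\<sigma> x = \<sigma> y" if "C = Pc x" "D = Pc y"
        using z that unfolding Pc_def by auto
      then show ?thesis using C D Kxy Pcsub unfolding Pc_def by auto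
    qed
  qed simp
  have Vclosed: "\<forall>z\<in>V. K z \<subseteq> V" using Ksub by blast
  have h: "hier V H"
    unfolding hier_def
  proof (intro conjI)
    show "finite V" by (rule finV)
    show "H \<subseteq> Pow V" unfolding H_def using WaV Ksub Pcsub by blast
    show "V \<in> H" unfolding H_def by blast
    show "{} \<notin> H" unfolding H_def using x0Wa xy0 Kself Pcself by blast
    show "\<forall>x\<in>V. {x} \<in> H" unfolding H_def by blast
    show "\<forall>C\<in>H. \<forall>D\<in>H. C \<subseteq> D \<or> D \<subseteq> C \<or> C \<inter> D = {}"
    proof (intro ballI)
      fix C D assume C: "C \<in> H" and D: "D \<in> H"
      have HC: "H = {V, Wa} \<union> Loc" unfolding H_def Loc_def by blast
      have cl: "X \<in> {V, Wa} \<Longrightarrow> \<forall>z\<in>X. K z \<subseteq> X" for X using Vclosed Waclosed by blast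
      consider "C \<in> {V, Wa}" "D \<in> {V, Wa}" | "C \<in> {V, Wa}" "D \<in> Loc" | "C \<in> Loc" "D \<in> {V, Wa}"
        | "C \<in> Loc" "D \<in> Loc" using C D HC by blast
      then show "C \<subseteq> D \<or> D \<subseteq> C \<or> C \<inter> D = {}"
      proof cases
        case 1 then show ?thesis using WaV by blast
      next
        case 2 then show ?thesis using lam_closed cl by blast
      next
        case 3 then show ?thesis using lam_closed[of D C] cl by blast
      next
        case 4 then show ?thesis using lam_loc by blast
      qed
    qed
  qed
  have KH: "x \<in> V \<Longrightarrow> K x \<in> H" for x unfolding H_def by blast
  have PcH: "x \<in> V \<Longrightarrow> Pc x \<in> H" for x unfolding H_def by blast
  have WaH: "Wa \<in> H" unfolding H_def by blast
  note LCP = LC_props[OF h]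
  have LC_big: "K x \<subseteq> LC H x y" if "x \<in> V" "y \<in> V" "\<sigma> x \<noteq> \<sigma> y" for x y
  proof -
    have C: "LC H x y \<in> H" "x \<in> LC H x y" "y \<in> LC H x y" using LCP that by blast+
    have "LC H x y \<in> {V, Wa} \<or> (\<exists>z\<in>V. LC H x y = {z} \<or> LC H x y = K z \<or> LC H x y = Pc z)"
      using C(1) unfolding H_def by blast
    then show ?thesis
    proof (elim disjE bexE)
      assume "LC H x y \<in> {V, Wa}" then show ?thesis using C Waclosed Ksub by blast
    next
      fix z assume "LC H x y = {z}" then show ?thesis using C that by simp
    next
      fix z assume Lz: "LC H x y = K z"
      then have "x \<in> K z" using C by simp
      then have "K x = K z" by (rule Ksame)
      then show ?thesis using Lz by simp
    next
      fix z assume "LC H x y = Pc z" then show ?thesis using C that unfolding Pc_def by simp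
    qed
  qed
  have LC_K: "LC H x y = K x" if "x \<in> V" "y \<in> V" "y \<in> K x" "\<sigma> x \<noteq> \<sigma> y" for x y
    using LC_big[OF that(1,2,4)] LCP(4)[OF that(1,2) KH[OF that(1)] Kself[OF that(1)] that(3)] by blast
  obtain VT :: "('a + nat) set" and le r node where ph: "phylo_tree VT le r (Inl ` V)" and inj: "inj_on node H"
    and VT: "VT = node ` H" and leN: "\<forall>C\<in>H. \<forall>D\<in>H. le (node C) (node D) \<longleftrightarrow> C \<subseteq> D"
    and lcaN: "\<forall>x\<in>V. \<forall>y\<in>V. lca VT le (Inl x) (Inl y) = node (LC H x y)"
    by (rule hier_tree_obt[OF h])
  have bm: "best_match VT le \<sigma> V x y \<longleftrightarrow> x \<in> V \<and> y \<in> V \<and> \<sigma> x \<noteq> \<sigma> y \<and>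
      (\<forall>y'\<in>V. \<sigma> y' = \<sigma> y \<longrightarrow> LC H x y \<subseteq> LC H x y')" for x y
  proof -
    have lle: "le (lca VT le (Inl x) (Inl y)) (lca VT le (Inl x) (Inl y')) \<longleftrightarrow> LC H x y \<subseteq> LC H x y'"
      if "x \<in> V" "y \<in> V" "y' \<in> V" for y'
      using lcaN leN LCP(1) that by simp
    show ?thesis
    proof (cases "x \<in> V \<and> y \<in> V")
      case True then show ?thesis unfolding best_match_def using lle by simp
    next
      case False then show ?thesis unfolding best_match_def by blast
    qed
  qed
  have notbm: "\<not> best_match VT le \<sigma> V p q" if "p \<in> V" "q \<in> V" "K p = {p}" "K q = {q}" "\<sigma> p = a" for p q
  proof
    assume b: "best_match VT le \<sigma> V p q"
    then have cq: "\<sigma> q \<noteq> a" using that unfolding bm by auto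
    have cq0: "\<sigma> y0 = \<sigma> q" using two_col[OF c2 xy0(4) that(1) that(2)] cq ab that by metis
    have "LC H p q \<subseteq> LC H p y0" using b cq0 xy0 unfolding bm by auto
    moreover have "p \<in> Wa" unfolding Wa_def Ia_def using that by blast
    then have "LC H p y0 \<subseteq> Wa" using LCP(4)[OF that(1) xy0(4) WaH] x0Wa by blast
    ultimately have "q \<in> Wa" using LCP(3)[OF that(1,2)] by blast
    then consider "q \<in> K x0" | "q \<in> Ia" unfolding Wa_def by blast
    then show False
    proof cases
      case 1 then have "K x0 = {q}" using Ksame that by metis
      moreover have "x0 \<in> K x0" using Kself xy0 by blast
      ultimately show False using xy0 y0K by auto
    next
      case 2 then show False using cq unfolding Ia_def by blast
    qed
  qed
  have rbm: "rbm_edges VT le \<sigma> V = E"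
  proof
    show "rbm_edges VT le \<sigma> V \<subseteq> E"
    proof
      fix e assume "e \<in> rbm_edges VT le \<sigma> V"
      then obtain x y where e: "e = {x,y}" and b1: "best_match VT le \<sigma> V x y" and b2: "best_match VT le \<sigma> V y x"
        unfolding rbm_edges_def by blast
      have xy: "x \<in> V" "y \<in> V" "\<sigma> x \<noteq> \<sigma> y" using b1 unfolding bm by auto
      have "y \<in> K x"
      proof (rule ccontr)
        assume nyx: "y \<notin> K x"
        have ox: "\<not> (\<exists>z\<in>K x. \<sigma> z \<noteq> \<sigma> x)"
        proof
          assume "\<exists>z\<in>K x. \<sigma> z \<noteq> \<sigma> x"
          then obtain z where z: "z \<in> K x" "\<sigma> z \<noteq> \<sigma> x" by blast
          have zV: "z \<in> V" using z Ksub by blast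
          have "\<sigma> z = \<sigma> y" using two_col[OF c2 zV xy(1) xy(2)] z xy by metis
          then have "LC H x y \<subseteq> LC H x z" using b1 zV unfolding bm by auto
          also have "\<dots> = K x" using LC_K[OF xy(1) zV z(1)] z by metis
          finally show False using LCP(3)[OF xy(1,2)] nyx by blast
        qed
        have oy: "\<not> (\<exists>z\<in>K y. \<sigma> z \<noteq> \<sigma> y)"
        proof
          assume "\<exists>z\<in>K y. \<sigma> z \<noteq> \<sigma> y"
          then obtain z where z: "z \<in> K y" "\<sigma> z \<noteq> \<sigma> y" by blast
          have zV: "z \<in> V" using z Ksub by blast
          have "\<sigma> z = \<sigma> x" using two_col[OF c2 zV xy(2) xy(1)] z xy by metis
          then have "LC H y x \<subseteq> LC H y z" using b2 zV unfolding bm by auto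
          also have "\<dots> = K y" using LC_K[OF xy(2) zV z(1)] z by metis
          finally have "x \<in> K y" using LCP(3)[OF xy(2,1)] by blast
          then have "K x = K y" using Ksame by metis
          then show False using nyx Kself xy by blast
        qed
        have tx: "K x = {x}" using ox nontriv xy by blast
        have ty: "K y = {y}" using oy nontriv xy by blast
        have "\<sigma> x = a \<or> \<sigma> y = a" using two_col[OF c2 xy(1) xy0(3) xy(2)] xy unfolding a_def by metis
        then show False using notbm[OF xy(1,2) tx ty] notbm[OF xy(2,1) ty tx] b1 b2 by blast
      qed
      then show "e \<in> E" using char[OF xy(1,2)] xy e by blast
    qed
  next
    show "E \<subseteq> rbm_edges VT le \<sigma> V"
    proof
      fix e assume e: "e \<in> E"
      then obtain x y where xy: "e = {x,y}" "x \<in> V" "y \<in> V" using edge_form[OF sg] by blast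
      have yK: "y \<in> K x" "\<sigma> x \<noteq> \<sigma> y" using char[OF xy(2,3)] e xy by blast+
      have xK: "x \<in> K y" using Ksame[OF yK(1)] Kself[OF xy(2)] by blast
      have "best_match VT le \<sigma> V x y" unfolding bm
        using xy yK LC_K[OF xy(2,3) yK] LC_big[OF xy(2)] by auto
      moreover have "best_match VT le \<sigma> V y x" unfolding bm
        using xy yK xK LC_K[OF xy(3,2) xK] LC_big[OF xy(3)] by auto
      ultimately show "e \<in> rbm_edges VT le \<sigma> V" unfolding rbm_edges_def using xy by blast
    qed
  qed
  have RB: "is_RBMG V E \<sigma>" unfolding is_RBMG_def using pc ph rbm by blast
  define t where "t v = (\<exists>z\<in>V. v = node (K z) \<and> K z \<noteq> {z})" for v
  have orth: "\<forall>x\<in>V. \<forall>y\<in>V. x \<noteq> y \<longrightarrow> ({x, y} \<in> E \<longleftrightarrow> t (lca VT le (Inl x) (Inl y)))"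
  proof (intro ballI impI)
    fix x y assume x: "x \<in> V" and y: "y \<in> V" and xy: "x \<noteq> y"
    show "{x, y} \<in> E \<longleftrightarrow> t (lca VT le (Inl x) (Inl y))"
    proof
      assume "{x,y} \<in> E"
      then have yK: "y \<in> K x" "\<sigma> x \<noteq> \<sigma> y" using char[OF x y] by blast+
      then have "K x \<noteq> {x}" using xy by auto
      then show "t (lca VT le (Inl x) (Inl y))" unfolding t_def using lcaN LC_K[OF x y yK] x y by auto
    next
      assume "t (lca VT le (Inl x) (Inl y))"
      then obtain z where z: "z \<in> V" "node (LC H x y) = node (K z)" "K z \<noteq> {z}"
        unfolding t_def using lcaN x y by auto
      have LCz: "LC H x y = K z" using inj_onD[OF inj z(2) LCP(1)[OF x y] KH[OF z(1)]] .
      have Kx: "K x = K z" using LCP(2)[OF x y] LCz Ksame by metis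
      have yK: "y \<in> K x" using LCP(3)[OF x y] LCz Kx by simp
      have ntx: "K x \<noteq> {x}" using Kx z Kself[OF z(1)] by auto
      have "\<sigma> x \<noteq> \<sigma> y"
      proof
        assume s: "\<sigma> x = \<sigma> y"
        have "y \<in> Pc x" "x \<in> Pc x" unfolding Pc_def using yK s Kself x by auto
        then have "LC H x y \<subseteq> Pc x" using LCP(4)[OF x y PcH[OF x]] by blast
        then have "K x \<subseteq> Pc x" using LCz Kx by simp
        then show False using nontriv[OF x ntx] unfolding Pc_def by blast
      qed
      then show "{x,y} \<in> E" using char[OF x y] yK by blast
    qed
  qed
  have "orthology_graph V E" unfolding orthology_graph_def using ph orth by blast
  then show ?thesis using RB by blast
qed



definition p4c :: "'a set set \<Rightarrow> bool" where
  "p4c E \<equiv> \<forall>x y x' y'. {x,y} \<in> E \<longrightarrow> {y,x'} \<in> E \<longrightarrow> {x',y'} \<in> E \<longrightarrow> {x,y'} \<in> E"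

lemma join_mem:
  assumes "V1 \<inter> V2 = {}"
  shows "{x,y} \<in> {{a, b} | a b. a \<in> V1 \<and> b \<in> V2} \<longleftrightarrow> (x \<in> V1 \<and> y \<in> V2) \<or> (x \<in> V2 \<and> y \<in> V1)"
proof
  assume "{x,y} \<in> {{a, b} | a b. a \<in> V1 \<and> b \<in> V2}"
  then obtain a b where "{x,y} = {a,b}" "a \<in> V1" "b \<in> V2" by blast
  then show "(x \<in> V1 \<and> y \<in> V2) \<or> (x \<in> V2 \<and> y \<in> V1)" by (metis doubleton_eq_iff)
next
  assume "(x \<in> V1 \<and> y \<in> V2) \<or> (x \<in> V2 \<and> y \<in> V1)"
  then show "{x,y} \<in> {{a, b} | a b. a \<in> V1 \<and> b \<in> V2}" by (auto simp: insert_commute)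
qed

lemma card_img_pos: "finite V \<Longrightarrow> V \<noteq> {} \<Longrightarrow> card (\<sigma> ` V) \<ge> 1"
  by (simp add: Suc_le_eq card_gt_0_iff)

lemma hc_props:
  assumes "hc_cograph \<sigma> V E"
  shows "simple_graph V E \<and> V \<noteq> {} \<and> properly_colored E \<sigma> \<and>
    (card (\<sigma> ` V) \<le> 2 \<longrightarrow> p4c E \<and> (card (\<sigma> ` V) = 1 \<longrightarrow> E = {}) \<and> (card (\<sigma> ` V) = 2 \<longrightarrow> E \<noteq> {}))"
  using assms
proof (induction rule: hc_cograph.induct)
  case (K1 x)
  then show ?case unfolding simple_graph_def properly_colored_def p4c_def by simp
next
  case (K2 V1 E1 V2 E2)
  define J where "J = {{a, b} | a b. a \<in> V1 \<and> b \<in> V2}"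
  note Jm = join_mem[OF K2.hyps(3), folded J_def]
  have fin: "finite V1" "finite V2" using K2.IH(1) K2.IH(2) unfolding simple_graph_def by simp_all
  have ne: "V1 \<noteq> {}" "V2 \<noteq> {}" using K2.IH(1) K2.IH(2) by simp_all
  have sg: "simple_graph (V1 \<union> V2) (E1 \<union> E2 \<union> J)"
    unfolding simple_graph_def
  proof (intro conjI ballI)
    show "finite (V1 \<union> V2)" using fin by simp
    fix e assume "e \<in> E1 \<union> E2 \<union> J"
    then consider "e \<in> E1" | "e \<in> E2" | "e \<in> J" by blast
    then show "\<exists>x y. e = {x, y} \<and> x \<noteq> y \<and> x \<in> V1 \<union> V2 \<and> y \<in> V1 \<union> V2"
    proof cases
      case 1 then show ?thesis using K2.IH(1) unfolding simple_graph_def by blast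
    next
      case 2 then show ?thesis using K2.IH(2) unfolding simple_graph_def by blast
    next
      case 3 then obtain a b where "e = {a,b}" "a \<in> V1" "b \<in> V2" unfolding J_def by blast
      then show ?thesis using K2.hyps(3) by blast
    qed
  qed
  have pc: "properly_colored (E1 \<union> E2 \<union> J) \<sigma>"
    unfolding properly_colored_def
  proof (intro allI impI)
    fix x y assume "{x,y} \<in> E1 \<union> E2 \<union> J"
    then consider "{x,y} \<in> E1" | "{x,y} \<in> E2" | "{x,y} \<in> J" by blast
    then show "\<sigma> x \<noteq> \<sigma> y"
    proof cases
      case 1 then show ?thesis using K2.IH(1) unfolding properly_colored_def by blast
    next
      case 2 then show ?thesis using K2.IH(2) unfolding properly_colored_def by blast
    next
      case 3 then have "(x \<in> V1 \<and> y \<in> V2) \<or> (x \<in> V2 \<and> y \<in> V1)" using Jm by blast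
      then show ?thesis using K2.hyps(4) by blast
    qed
  qed
  have rest: "card (\<sigma> ` (V1 \<union> V2)) \<le> 2 \<longrightarrow> p4c (E1 \<union> E2 \<union> J) \<and>
     (card (\<sigma> ` (V1 \<union> V2)) = 1 \<longrightarrow> E1 \<union> E2 \<union> J = {}) \<and> (card (\<sigma> ` (V1 \<union> V2)) = 2 \<longrightarrow> E1 \<union> E2 \<union> J \<noteq> {})"
  proof
    assume c: "card (\<sigma> ` (V1 \<union> V2)) \<le> 2"
    have cu: "card (\<sigma> ` (V1 \<union> V2)) = card (\<sigma> ` V1) + card (\<sigma> ` V2)"
      using card_Un_disjoint[of "\<sigma> ` V1" "\<sigma> ` V2"] fin K2.hyps(4) by (simp add: image_Un)
    have c1: "card (\<sigma> ` V1) = 1" "card (\<sigma> ` V2) = 1"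
      using c cu card_img_pos[OF fin(1) ne(1), of \<sigma>] card_img_pos[OF fin(2) ne(2), of \<sigma>] by linarith+
    have E12: "E1 = {}" "E2 = {}" using K2.IH c1 by auto
    have Jne: "J \<noteq> {}" using ne unfolding J_def by blast
    have "p4c J"
      unfolding p4c_def Jm using K2.hyps(3) by blast
    then show "p4c (E1 \<union> E2 \<union> J) \<and>
     (card (\<sigma> ` (V1 \<union> V2)) = 1 \<longrightarrow> E1 \<union> E2 \<union> J = {}) \<and> (card (\<sigma> ` (V1 \<union> V2)) = 2 \<longrightarrow> E1 \<union> E2 \<union> J \<noteq> {})"
      using E12 Jne cu c1 by simp
  qed
  have "V1 \<union> V2 \<noteq> {}" using ne by simp
  with sg pc rest show ?case unfolding J_def by (intro conjI)
next
  case (K3 V1 E1 V2 E2)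
  note I1 = K3.IH(1) and I2 = K3.IH(2)
  have s1: "simple_graph V1 E1" "simple_graph V2 E2"
    using I1[THEN conjunct1] I2[THEN conjunct1] by - 
  have ne: "V1 \<noteq> {}" "V2 \<noteq> {}" using I1[THEN conjunct2, THEN conjunct1] I2[THEN conjunct2, THEN conjunct1] by -
  have pcs: "properly_colored E1 \<sigma>" "properly_colored E2 \<sigma>"
    using I1[THEN conjunct2, THEN conjunct2, THEN conjunct1] I2[THEN conjunct2, THEN conjunct2, THEN conjunct1] by -
  have fin: "finite V1" "finite V2" using s1[unfolded simple_graph_def, THEN conjunct1] by -
  have sg: "simple_graph (V1 \<union> V2) (E1 \<union> E2)"
    unfolding simple_graph_def
  proof (intro conjI ballI)
    show "finite (V1 \<union> V2)" using fin by simp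
    fix e assume "e \<in> E1 \<union> E2"
    then consider "e \<in> E1" | "e \<in> E2" by blast
    then show "\<exists>x y. e = {x, y} \<and> x \<noteq> y \<and> x \<in> V1 \<union> V2 \<and> y \<in> V1 \<union> V2"
    proof cases
      case 1 then obtain x y where "e = {x, y} \<and> x \<noteq> y \<and> x \<in> V1 \<and> y \<in> V1"
        using edge_form[OF s1(1)] by blast
      then show ?thesis by blast
    next
      case 2 then obtain x y where "e = {x, y} \<and> x \<noteq> y \<and> x \<in> V2 \<and> y \<in> V2"
        using edge_form[OF s1(2)] by blast
      then show ?thesis by blast
    qed
  qed
  have pc: "properly_colored (E1 \<union> E2) \<sigma>"
    using pcs unfolding properly_colored_def by blast
  have sub: "\<sigma> ` V1 \<subseteq> \<sigma> ` V2 \<or> \<sigma> ` V2 \<subseteq> \<sigma> ` V1" using K3.hyps(4) by blast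
  have rest: "card (\<sigma> ` (V1 \<union> V2)) \<le> 2 \<longrightarrow> p4c (E1 \<union> E2) \<and>
     (card (\<sigma> ` (V1 \<union> V2)) = 1 \<longrightarrow> E1 \<union> E2 = {}) \<and> (card (\<sigma> ` (V1 \<union> V2)) = 2 \<longrightarrow> E1 \<union> E2 \<noteq> {})"
  proof
    assume c: "card (\<sigma> ` (V1 \<union> V2)) \<le> 2"
    have m1: "card (\<sigma> ` V1) \<le> card (\<sigma> ` (V1 \<union> V2))" "card (\<sigma> ` V2) \<le> card (\<sigma> ` (V1 \<union> V2))"
      using fin by (simp_all add: card_mono image_mono)
    have IH1: "p4c E1 \<and> (card (\<sigma> ` V1) = 1 \<longrightarrow> E1 = {}) \<and> (card (\<sigma> ` V1) = 2 \<longrightarrow> E1 \<noteq> {})"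
      using K3.IH(1) m1 c by simp
    have IH2: "p4c E2 \<and> (card (\<sigma> ` V2) = 1 \<longrightarrow> E2 = {}) \<and> (card (\<sigma> ` V2) = 2 \<longrightarrow> E2 \<noteq> {})"
      using K3.IH(2) m1 c by simp
    have p1: "{x,y} \<in> E1 \<Longrightarrow> x \<in> V1 \<and> y \<in> V1" for x y using edge_in[OF s1(1)] by blast
    have p2: "{x,y} \<in> E2 \<Longrightarrow> x \<in> V2 \<and> y \<in> V2" for x y using edge_in[OF s1(2)] by blast
    have "p4c (E1 \<union> E2)"
      unfolding p4c_def
    proof (intro allI impI)
      fix x y x' y' assume e: "{x,y} \<in> E1 \<union> E2" "{y,x'} \<in> E1 \<union> E2" "{x',y'} \<in> E1 \<union> E2"
      show "{x,y'} \<in> E1 \<union> E2"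
      proof (cases "{x,y} \<in> E1")
        case True
        then have "{y,x'} \<in> E1" using e p1 p2 K3.hyps(3) by blast
        then have "{x',y'} \<in> E1" using e p1 p2 K3.hyps(3) by blast
        then show ?thesis using IH1 True \<open>{y,x'} \<in> E1\<close> unfolding p4c_def by blast
      next
        case False
        then have "{x,y} \<in> E2" using e by blast
        then have "{y,x'} \<in> E2" using e p1 p2 K3.hyps(3) by blast
        then have "{x',y'} \<in> E2" using e p1 p2 K3.hyps(3) by blast
        then show ?thesis using IH2 \<open>{x,y} \<in> E2\<close> \<open>{y,x'} \<in> E2\<close> unfolding p4c_def by blast
      qed
    qed
    moreover have "card (\<sigma> ` (V1 \<union> V2)) = 1 \<longrightarrow> E1 \<union> E2 = {}"
    proof
      assume "card (\<sigma> ` (V1 \<union> V2)) = 1"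
      then have "card (\<sigma> ` V1) = 1" "card (\<sigma> ` V2) = 1"
        using m1 card_img_pos[OF fin(1) ne(1), of \<sigma>] card_img_pos[OF fin(2) ne(2), of \<sigma>] by linarith+
      then show "E1 \<union> E2 = {}" using IH1 IH2 by simp
    qed
    moreover have "card (\<sigma> ` (V1 \<union> V2)) = 2 \<longrightarrow> E1 \<union> E2 \<noteq> {}"
    proof
      assume c2: "card (\<sigma> ` (V1 \<union> V2)) = 2"
      have "\<sigma> ` (V1 \<union> V2) = \<sigma> ` V2 \<or> \<sigma> ` (V1 \<union> V2) = \<sigma> ` V1" using sub by (auto simp: image_Un)
      then show "E1 \<union> E2 \<noteq> {}" using IH1 IH2 c2 by auto
    qed
    ultimately show "p4c (E1 \<union> E2) \<and>
     (card (\<sigma> ` (V1 \<union> V2)) = 1 \<longrightarrow> E1 \<union> E2 = {}) \<and> (card (\<sigma> ` (V1 \<union> V2)) = 2 \<longrightarrow> E1 \<union> E2 \<noteq> {})"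
      by blast
  qed
  show ?case using sg pc rest ne by blast
qed

lemma hc_to_P:
  assumes "hc_cograph \<sigma> V E" "card (\<sigma> ` V) = 2"
  shows "simple_graph V E \<and> properly_colored E \<sigma> \<and> bicluster_graph V E \<and> E \<noteq> {}"
proof -
  have h: "simple_graph V E" "properly_colored E \<sigma>" "p4c E" "E \<noteq> {}"
    using hc_props[OF assms(1)] assms(2) by auto
  then show ?thesis using p4_bicluster[OF h(1) assms(2) h(2)] unfolding p4c_def by blast
qed

lemma mono_hc:
  assumes "finite S" "S \<noteq> {}" "\<forall>x\<in>S. \<sigma> x = c"
  shows "hc_cograph \<sigma> S {}"
  using assms
proof (induction S rule: finite_ne_induct)
  case (singleton x) show ?case by (rule K1)
next
  case (insert x F)
  have "hc_cograph \<sigma> ({x} \<union> F) ({} \<union> {})"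
  proof (rule K3)
    show "hc_cograph \<sigma> {x} {}" by (rule K1)
    show "hc_cograph \<sigma> F {}" using insert by simp
    show "{x} \<inter> F = {}" using insert by simp
    have "\<sigma> ` F = {c}" using insert by auto
    moreover have "\<sigma> ` {x} = {c}" using insert by auto
    ultimately show "\<sigma> ` {x} \<inter> \<sigma> ` F \<in> {\<sigma> ` {x}, \<sigma> ` F}" by simp
  qed
  then show ?case by simp
qed



lemma P_to_hc:
  assumes sg: "simple_graph V E" and c2: "card (\<sigma> ` V) = 2" and pc: "properly_colored E \<sigma>"
    and bc: "bicluster_graph V E" and ne: "E \<noteq> {}"
  shows "hc_cograph \<sigma> V E"
proof -
  define K where "K = connected_component V E"
  have char: "{x,y} \<in> E \<longleftrightarrow> y \<in> K x \<and> \<sigma> x \<noteq> \<sigma> y" if "x \<in> V" "y \<in> V" for x y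
    unfolding K_def using bicluster_char[OF sg c2 pc bc that] .
  have Kself: "x \<in> V \<Longrightarrow> x \<in> K x" for x unfolding K_def by (rule cc_self)
  have Ksub: "K x \<subseteq> V" for x unfolding K_def by (rule cc_sub)
  have Ksame: "y \<in> K x \<Longrightarrow> K y = K x" for x y unfolding K_def by (rule cc_same)
  have Ktriv: "x \<in> V \<Longrightarrow> K x = {x} \<longleftrightarrow> (\<forall>z. {x,z} \<notin> E)" for x unfolding K_def using cc_triv_iff[OF _ sg] by blast
  have finV: "finite V" using sg unfolding simple_graph_def by blast
  define R where "R S = {e \<in> E. e \<subseteq> S}" for S
  have edgeK: "K u = K v" if "{u,v} \<in> E" for u v
  proof -
    have "u \<in> V" "v \<in> V" using edge_in[OF sg that] by blast+
    then have "v \<in> K u" using char that by blast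
    then show ?thesis using Ksame by metis
  qed
  have comp: "hc_cograph \<sigma> (K x) (R (K x))" if x: "x \<in> V" for x
  proof (cases "K x = {x}")
    case True
    have "R (K x) = {}"
    proof (rule ccontr)
      assume "R (K x) \<noteq> {}"
      then obtain e where e: "e \<in> E" "e \<subseteq> {x}" unfolding R_def True by blast
      then obtain u v where "e = {u,v}" "u \<noteq> v" using edge_form[OF sg] by blast
      then show False using e by blast
    qed
    then show ?thesis using True K1 by metis
  next
    case False
    then obtain w where w: "{x,w} \<in> E" using Ktriv x by blast
    have wV: "w \<in> V" using edge_in[OF sg w] by blast
    have wK: "w \<in> K x" "\<sigma> x \<noteq> \<sigma> w" using char[OF x wV] w by blast+
    define A where "A = {z \<in> K x. \<sigma> z = \<sigma> x}"
    define B where "B = {z \<in> K x. \<sigma> z \<noteq> \<sigma> x}"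
    have finK: "finite (K x)" using finite_subset[OF Ksub finV] .
    have AB: "A \<noteq> {}" "B \<noteq> {}" "A \<inter> B = {}" "A \<union> B = K x"
      using Kself[OF x] wK unfolding A_def B_def by auto
    have Bcol: "\<sigma> z = \<sigma> w" if zB: "z \<in> B" for z
    proof -
      have zV: "z \<in> V" using zB Ksub unfolding B_def by blast
      have "\<sigma> z \<noteq> \<sigma> x" using zB unfolding B_def by blast
      then show ?thesis using two_col[OF c2 zV x wV] wK(2) by blast
    qed
    have fA: "finite A" "finite B" using finK AB(4) by (metis finite_Un)+
    have hA: "hc_cograph \<sigma> A {}" by (rule mono_hc[OF fA(1) AB(1), of _ "\<sigma> x"]) (simp add: A_def)
    have hB: "hc_cograph \<sigma> B {}" by (rule mono_hc[OF fA(2) AB(2), of _ "\<sigma> w"]) (use Bcol in blast)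
    have cAB: "\<sigma> ` A \<inter> \<sigma> ` B = {}" unfolding A_def B_def by auto
    have j: "hc_cograph \<sigma> (A \<union> B) ({} \<union> {} \<union> {{a, b} | a b. a \<in> A \<and> b \<in> B})"
      by (rule K2[OF hA hB AB(3) cAB])
    have "{{a, b} | a b. a \<in> A \<and> b \<in> B} = R (K x)"
    proof
      show "{{a, b} | a b. a \<in> A \<and> b \<in> B} \<subseteq> R (K x)"
      proof
        fix e assume "e \<in> {{a, b} | a b. a \<in> A \<and> b \<in> B}"
        then obtain a b where ab: "e = {a,b}" "a \<in> A" "b \<in> B" by blast
        have V: "a \<in> V" "b \<in> V" using ab Ksub unfolding A_def B_def by blast+
        have "K a = K x" "K b = K x" using ab Ksame unfolding A_def B_def by auto
        then have "b \<in> K a" using V Kself by metis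
        moreover have "\<sigma> a \<noteq> \<sigma> b" using ab unfolding A_def B_def by auto
        ultimately have "{a,b} \<in> E" using char V by blast
        then show "e \<in> R (K x)" unfolding R_def using ab AB(4) by auto
      qed
    next
      show "R (K x) \<subseteq> {{a, b} | a b. a \<in> A \<and> b \<in> B}"
      proof
        fix e assume e: "e \<in> R (K x)"
        then obtain u v where uv: "e = {u,v}" "u \<in> V" "v \<in> V" using edge_form[OF sg] unfolding R_def by blast
        have uvK: "u \<in> K x" "v \<in> K x" using e uv unfolding R_def by auto
        have "\<sigma> u \<noteq> \<sigma> v" using pc e uv unfolding R_def properly_colored_def by blast
        then have "(\<sigma> u = \<sigma> x \<and> \<sigma> v \<noteq> \<sigma> x) \<or> (\<sigma> v = \<sigma> x \<and> \<sigma> u \<noteq> \<sigma> x)"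
          using two_col[OF c2 uv(2) x uv(3)] by metis
        then have "(u \<in> A \<and> v \<in> B) \<or> (v \<in> A \<and> u \<in> B)" using uvK unfolding A_def B_def by blast
        then show "e \<in> {{a, b} | a b. a \<in> A \<and> b \<in> B}" using uv(1) by (auto simp: insert_commute)
      qed
    qed
    then show ?thesis using j AB(4) by simp
  qed
  obtain e0 where e0: "e0 \<in> E" using ne by blast
  then obtain x0 y0 where xy0: "e0 = {x0,y0}" "x0 \<in> V" "y0 \<in> V" using edge_form[OF sg] by blast
  have y0K: "y0 \<in> K x0" "\<sigma> x0 \<noteq> \<sigma> y0" using char[OF xy0(2,3)] e0 xy0 by blast+
  have colK0: "\<sigma> ` K x0 = \<sigma> ` V"
  proof (rule card_subset_eq)
    show "finite (\<sigma> ` V)" using finV by simp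
    show "\<sigma> ` K x0 \<subseteq> \<sigma> ` V" using Ksub by blast
    have "{\<sigma> x0, \<sigma> y0} \<subseteq> \<sigma> ` K x0" using Kself[OF xy0(2)] y0K by blast
    then have "card {\<sigma> x0, \<sigma> y0} \<le> card (\<sigma> ` K x0)"
      using finite_subset[OF Ksub finV] by (simp add: card_mono)
    then show "card (\<sigma> ` K x0) = card (\<sigma> ` V)" using y0K(2) c2
      by (metis \<open>\<sigma> ` K x0 \<subseteq> \<sigma> ` V\<close> \<open>finite (\<sigma> ` V)\<close> card_2_iff card_mono le_antisym)
  qed
  have main: "\<forall>U. card U = n \<longrightarrow> U \<subseteq> V \<longrightarrow> (\<forall>z\<in>U. K z \<subseteq> U) \<longrightarrow> U \<inter> K x0 = {} \<longrightarrow>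
      hc_cograph \<sigma> (K x0 \<union> U) (R (K x0 \<union> U))" for n
  proof (induction n rule: less_induct)
    case (less n)
    show ?case
    proof (intro allI impI)
      fix U assume cU: "card U = n" and UV: "U \<subseteq> V" and cl: "\<forall>z\<in>U. K z \<subseteq> U" and dj: "U \<inter> K x0 = {}"
      have finU: "finite U" using finite_subset[OF UV finV] .
      show "hc_cograph \<sigma> (K x0 \<union> U) (R (K x0 \<union> U))"
      proof (cases "U = {}")
        case True then show ?thesis using comp[OF xy0(2)] by simp
      next
        case False
        then obtain z where z: "z \<in> U" by blast
        define U' where "U' = U - K z"
        have zV: "z \<in> V" using z UV by blast
        have KzU: "K z \<subseteq> U" using cl z by blast
        have cl': "\<forall>w\<in>U'. K w \<subseteq> U'"
        proof
          fix w assume w: "w \<in> U'"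
          have "K w \<inter> K z = {}"
          proof (rule ccontr)
            assume "K w \<inter> K z \<noteq> {}"
            then obtain q where "q \<in> K w" "q \<in> K z" by blast
            then have "K w = K z" using Ksame by metis
            then show False using w Kself UV unfolding U'_def by blast
          qed
          then show "K w \<subseteq> U'" using cl w unfolding U'_def by blast
        qed
        have "card U' < card U"
        proof (rule psubset_card_mono[OF finU])
          show "U' \<subset> U" unfolding U'_def using Kself[OF zV] z by blast
        qed
        then have IH: "hc_cograph \<sigma> (K x0 \<union> U') (R (K x0 \<union> U'))"
          using less.IH[of "card U'"] cU UV cl' dj unfolding U'_def by blast
        have d: "(K x0 \<union> U') \<inter> K z = {}" using KzU dj unfolding U'_def by blast
        have colz: "\<sigma> ` (K x0 \<union> U') \<inter> \<sigma> ` K z \<in> {\<sigma> ` (K x0 \<union> U'), \<sigma> ` K z}"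
        proof -
          have "\<sigma> ` K z \<subseteq> \<sigma> ` (K x0 \<union> U')" using colK0 Ksub by blast
          then show ?thesis by blast
        qed
        have u: "hc_cograph \<sigma> ((K x0 \<union> U') \<union> K z) (R (K x0 \<union> U') \<union> R (K z))"
          by (rule K3[OF IH comp[OF zV] d colz])
        have e1: "(K x0 \<union> U') \<union> K z = K x0 \<union> U" using KzU unfolding U'_def by blast
        have e2: "R (K x0 \<union> U') \<union> R (K z) = R (K x0 \<union> U)"
        proof
          show "R (K x0 \<union> U') \<union> R (K z) \<subseteq> R (K x0 \<union> U)" unfolding R_def U'_def using KzU by blast
          show "R (K x0 \<union> U) \<subseteq> R (K x0 \<union> U') \<union> R (K z)"
          proof
            fix e assume e: "e \<in> R (K x0 \<union> U)"
            then obtain u v where uv: "e = {u,v}" using edge_form[OF sg] unfolding R_def by blast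
            have Kuv: "K u = K v" using edgeK e uv unfolding R_def by blast
            have uvV: "u \<in> V" "v \<in> V" using edge_in[OF sg] e uv unfolding R_def by blast+
            show "e \<in> R (K x0 \<union> U') \<union> R (K z)"
            proof (cases "u \<in> K z")
              case True
              then have "K u = K z" using Ksame by metis
              then have "v \<in> K z" using Kuv Kself uvV by metis
              then show ?thesis using True e uv unfolding R_def by blast
            next
              case False
              have "v \<notin> K z"
              proof
                assume "v \<in> K z"
                then have "K v = K z" using Ksame by metis
                then show False using Kuv Kself uvV False by metis
              qed
              then show ?thesis using False e uv unfolding R_def U'_def by blast
            qed
          qed
        qed
        show ?thesis using u e1 e2 by simp
      qed
    qed
  qed
  define U where "U = V - K x0"
  have "\<forall>z\<in>U. K z \<subseteq> U"
  proof
    fix z assume z: "z \<in> U"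
    have "K z \<inter> K x0 = {}"
    proof (rule ccontr)
      assume "K z \<inter> K x0 \<noteq> {}"
      then obtain q where "q \<in> K z" "q \<in> K x0" by blast
      then have "K z = K x0" using Ksame by metis
      then show False using z Kself unfolding U_def by blast
    qed
    then show "K z \<subseteq> U" using Ksub unfolding U_def by blast
  qed
  then have "hc_cograph \<sigma> (K x0 \<union> U) (R (K x0 \<union> U))" using main[of "card U"] unfolding U_def by blast
  moreover have "K x0 \<union> U = V" unfolding U_def using Ksub by blast
  moreover have "R V = E" unfolding R_def using edge_form[OF sg] by blast
  ultimately show ?thesis by simp
qed


theorem mainTheorem2:
  fixes V :: "'a set" and E :: "'a set set" and \<sigma> :: "'a \<Rightarrow> 'c"
  assumes "simple_graph V E"
    and "card (\<sigma> ` V) = 2"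
  shows "(is_n_RBMG 2 V E \<sigma> \<longleftrightarrow>
            properly_colored E \<sigma> \<and> bicluster_graph V E \<and> E \<noteq> {})
       \<and> (properly_colored E \<sigma> \<and> bicluster_graph V E \<and> E \<noteq> {} \<longleftrightarrow>
            is_n_RBMG 2 V E \<sigma> \<and> orthology_graph V E)
       \<and> (is_n_RBMG 2 V E \<sigma> \<and> orthology_graph V E \<longleftrightarrow>
            is_n_hc_cograph 2 V E \<sigma>)"
proof -
  note sg = assms(1) and c2 = assms(2)
  have A: "is_n_RBMG 2 V E \<sigma> \<Longrightarrow> properly_colored E \<sigma> \<and> bicluster_graph V E \<and> E \<noteq> {}"
    unfolding is_n_RBMG_def using rbmg_props[OF sg c2] by blast
  have B: "properly_colored E \<sigma> \<and> bicluster_graph V E \<and> E \<noteq> {} \<Longrightarrow> is_n_RBMG 2 V E \<sigma> \<and> orthology_graph V E"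
    unfolding is_n_RBMG_def using bic_construct[OF sg c2] c2 by blast
  have C: "is_n_hc_cograph 2 V E \<sigma> \<Longrightarrow> properly_colored E \<sigma> \<and> bicluster_graph V E \<and> E \<noteq> {}"
    unfolding is_n_hc_cograph_def using hc_to_P by blast
  have D: "properly_colored E \<sigma> \<and> bicluster_graph V E \<and> E \<noteq> {} \<Longrightarrow> is_n_hc_cograph 2 V E \<sigma>"
    unfolding is_n_hc_cograph_def using P_to_hc[OF sg c2] c2 by blast
  show ?thesis using A B C D by blast
qed

end
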